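(* Assume the standing setup below. For every integer $i$ with $0\le i\le s-2r+1$ and every $I\in\mathbb{P}_i(X)$, the linear form \[ \sum_{H\in \mathbb{P}_{i+2r}(X),\ I\subseteq H} L_H \] lies in the $\mathbb{F}_p$-linear span of $\{L_H : H\subseteq X,\ i\le |H|\le i+2r-1\}$.
   Context: Standing setup: $p$ is a prime; $K=\{k_1,\ldots,k_r\}$ and $L=\{l_1,\ldots,l_s\}$ are disjoint subsets of $\{0,1,\ldots,p-1\}$; $\mathcal{A}=\{A_1,\ldots,A_m\}$ is a family of distinct subsets of $[n]$ with $|A_i|\pmod p\in K$ for all $i$ and $|A_i\cap A_j|\pmod p\in L$ for all $i\ne j$. Let $X=[n-1]$. Associate a variable $x_i$ to each $A_i$, and for each $I\subseteq X$ define the linear form over $\mathbb{F}_p$: $L_I=\sum_{i:\ I\subseteq A_i} x_i$. For $j\ge0$, $\mathbb{P}_j(X)$ is the set of $j$-element subsets of $X$. *)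

theory Defs
  imports "HOL-Number_Theory.Cong"
begin

text \<open>Linear forms over F_p in the variables x_0, ..., x_(m-1) (one variable per set A_i,
  the family being indexed by {0..<m}) are represented by their coefficient vectors
  nat => int, coefficients read modulo p.  The form L_I has coefficient 1 at x_i
  exactly when I is a subset of A_i.\<close>

definition lin_form :: "(nat \<Rightarrow> nat set) \<Rightarrow> nat \<Rightarrow> nat set \<Rightarrow> nat \<Rightarrow> int" where
  "lin_form A m I = (\<lambda>i. if i < m \<and> I \<subseteq> A i then 1 else 0)"

definition in_span_mod :: "nat \<Rightarrow> nat \<Rightarrow> (nat \<Rightarrow> int) \<Rightarrow> ('b \<Rightarrow> nat \<Rightarrow> int) \<Rightarrow> 'b set \<Rightarrow> bool" where
  "in_span_mod p m v g G \<longleftrightarrow>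
     (\<exists>c :: 'b \<Rightarrow> int. \<forall>j<m. [v j = (\<Sum>h\<in>G. c h * g h j)] (mod int p))"

end

theory Submission
  imports Defs
begin

definition BS :: "nat \<Rightarrow> (nat \<Rightarrow> int) \<Rightarrow> bool" where
  "BS k f \<longleftrightarrow> (\<exists>c. \<forall>y. f y = (\<Sum>t<k. c t * int (y choose t)))"

lemma BS_mono: assumes "BS k f" "k \<le> k'" shows "BS k' f"
proof -
  obtain c where c: "\<And>y. f y = (\<Sum>t<k. c t * int (y choose t))" using assms unfolding BS_def by blast
  have "f y = (\<Sum>t<k'. (if t < k then c t else 0) * int (y choose t))" for y
  proof -
    have "(\<Sum>t<k'. (if t < k then c t else 0) * int (y choose t)) = (\<Sum>t<k. (if t < k then c t else 0) * int (y choose t))"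
      by (rule sum.mono_neutral_right) (use assms(2) in auto)
    then show ?thesis using c by simp
  qed
  then show ?thesis unfolding BS_def by (intro exI[of _ "\<lambda>t. if t < k then c t else 0"]) blast
qed

lemma BS_add: assumes "BS k f" "BS k g" shows "BS k (\<lambda>y. f y + g y)"
proof -
  obtain c where c: "\<And>y. f y = (\<Sum>t<k. c t * int (y choose t))" using assms unfolding BS_def by blast
  obtain d where d: "\<And>y. g y = (\<Sum>t<k. d t * int (y choose t))" using assms unfolding BS_def by blast
  have "f y + g y = (\<Sum>t<k. (c t + d t) * int (y choose t))" for y
    by (simp add: c d distrib_right sum.distrib)
  then show ?thesis unfolding BS_def by (intro exI[of _ "\<lambda>t. c t + d t"]) blast
qed

lemma BS_smult: assumes "BS k f" shows "BS k (\<lambda>y. a * f y)"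
proof -
  obtain c where c: "\<And>y. f y = (\<Sum>t<k. c t * int (y choose t))" using assms unfolding BS_def by blast
  have "a * f y = (\<Sum>t<k. (a * c t) * int (y choose t))" for y
    by (simp add: c sum_distrib_left mult.assoc)
  then show ?thesis unfolding BS_def by (intro exI[of _ "\<lambda>t. a * c t"]) blast
qed

lemma BS_zero: "BS k (\<lambda>y. 0)"
  unfolding BS_def by (rule exI[of _ "\<lambda>_. 0"]) simp

lemma BS_sum: assumes "finite S" "\<And>x. x \<in> S \<Longrightarrow> BS k (g x)" shows "BS k (\<lambda>y. \<Sum>x\<in>S. g x y)"
  using assms by (induction S rule: finite_induct) (auto intro: BS_add BS_zero)

lemma BS_binom: assumes "t < k" shows "BS k (\<lambda>y. int (y choose t))"
proof -
  have "int (y choose t) = (\<Sum>s<k. (if s = t then 1 else 0) * int (y choose s))" for y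
  proof -
    have "(\<Sum>s<k. (if s = t then 1 else 0) * int (y choose s)) = (\<Sum>s<k. if s = t then int (y choose s) else 0)"
      by (rule sum.cong) auto
    then show ?thesis using assms by (simp add: sum.delta)
  qed
  then show ?thesis unfolding BS_def by (intro exI[of _ "\<lambda>s. if s = t then 1 else 0"]) blast
qed

lemma binom_mult_nat: "y * (y choose t) = Suc t * (y choose Suc t) + t * (y choose t)"
proof -
  have "Suc t * (y choose Suc t) = (y - t) * (y choose t)"
    by (metis binomial_absorb_comp binomial_absorption)
  moreover have "(y - t) * (y choose t) + t * (y choose t) = y * (y choose t)"
    by (cases "t \<le> y") (auto simp: algebra_simps diff_mult_distrib)
  ultimately show ?thesis by simp
qed

lemma binom_mult: "(int y - u) * int (y choose t) = int (Suc t) * int (y choose Suc t) + (int t - u) * int (y choose t)"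
proof -
  have "int y * int (y choose t) = int (Suc t) * int (y choose Suc t) + int t * int (y choose t)"
    using arg_cong[OF binom_mult_nat[of y t], of int] by (simp only: of_nat_mult of_nat_add)
  then show ?thesis by (simp add: left_diff_distrib)
qed

lemma BS_mult: assumes "BS k f" shows "BS (Suc k) (\<lambda>y. (int y - u) * f y)"
proof -
  obtain c where c: "\<And>y. f y = (\<Sum>t<k. c t * int (y choose t))" using assms unfolding BS_def by blast
  have e: "(int y - u) * f y = (\<Sum>t<k. c t * ((int y - u) * int (y choose t)))" for y
    by (simp add: c sum_distrib_left algebra_simps)
  have "BS (Suc k) (\<lambda>y. c t * ((int y - u) * int (y choose t)))" if "t < k" for t
  proof -
    have "BS (Suc k) (\<lambda>y. int (Suc t) * int (y choose Suc t) + (int t - u) * int (y choose t))"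
      using that by (intro BS_add BS_smult BS_binom) auto
    then show ?thesis unfolding binom_mult[symmetric] by (rule BS_smult)
  qed
  then have "BS (Suc k) (\<lambda>y. \<Sum>t<k. c t * ((int y - u) * int (y choose t)))"
    by (intro BS_sum) auto
  then show ?thesis using e by simp
qed
lemma BS_step:
  assumes f: "\<And>y. f y = D * int (y choose k) + g y" and g: "BS k g"
  shows "\<exists>g'. BS (Suc k) g' \<and> (\<forall>y. (int y - u) * f y = D * int (Suc k) * int (y choose Suc k) + g' y)"
proof -
  define g' where "g' y = D * (int k - u) * int (y choose k) + (int y - u) * g y" for y
  have "BS (Suc k) g'" unfolding g'_def
    by (intro BS_add BS_smult BS_binom BS_mult g) auto
  moreover have "(int y - u) * f y = D * int (Suc k) * int (y choose Suc k) + g' y" for y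
  proof -
    have "(int y - u) * f y = D * ((int y - u) * int (y choose k)) + (int y - u) * g y"
      by (simp add: f algebra_simps)
    also have "\<dots> = D * int (Suc k) * int (y choose Suc k) + g' y"
      unfolding binom_mult g'_def by (simp add: algebra_simps)
    finally show ?thesis .
  qed
  ultimately show ?thesis by blast
qed

lemma prodK:
  fixes i :: nat
  assumes "finite S"
  shows "\<exists>g. BS (2 * card S) g \<and> (\<forall>y. (\<Prod>k\<in>S. (int y - (int k - int i)) * (int y - (int k - int i - 1)))
             = fact (2 * card S) * int (y choose (2 * card S)) + g y)"
  using assms
proof (induction S rule: finite_induct)
  case empty
  show ?case by (intro exI[of _ "\<lambda>_. 0"]) (simp add: BS_zero)
next
  case (insert x S)
  then obtain g where g: "BS (2 * card S) g"
    "\<And>y. (\<Prod>k\<in>S. (int y - (int k - int i)) * (int y - (int k - int i - 1)))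
             = fact (2 * card S) * int (y choose (2 * card S)) + g y" by blast
  obtain g1 where g1: "BS (Suc (2 * card S)) g1" "\<forall>y. (int y - (int x - int i - 1)) * (\<Prod>k\<in>S. (int y - (int k - int i)) * (int y - (int k - int i - 1)))
     = fact (2 * card S) * int (Suc (2 * card S)) * int (y choose Suc (2 * card S)) + g1 y"
    using BS_step[OF g(2) g(1)] by blast
  obtain g2 where g2: "BS (Suc (Suc (2 * card S))) g2" "\<forall>y. (int y - (int x - int i)) * ((int y - (int x - int i - 1)) * (\<Prod>k\<in>S. (int y - (int k - int i)) * (int y - (int k - int i - 1))))
     = fact (2 * card S) * int (Suc (2 * card S)) * int (Suc (Suc (2 * card S))) * int (y choose Suc (Suc (2 * card S))) + g2 y"
    using BS_step[of "\<lambda>y. (int y - (int x - int i - 1)) * (\<Prod>k\<in>S. (int y - (int k - int i)) * (int y - (int k - int i - 1)))" "fact (2 * card S) * int (Suc (2 * card S))", OF _ g1(1)] g1(2) by blast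
  have c: "2 * card (insert x S) = Suc (Suc (2 * card S))" using insert by simp
  have fe: "(fact (Suc (Suc (2 * card S))) :: int) = fact (2 * card S) * int (Suc (2 * card S)) * int (Suc (Suc (2 * card S)))"
    by (simp add: fact_Suc algebra_simps)
  show ?case unfolding c
    apply (intro exI[of _ g2] conjI g2(1) allI)
    using g2(2) insert(1,2) by (simp add: fe mult.assoc)
qed
lemma count_sup:
  assumes "finite B" "I \<subseteq> B"
  shows "card {H. I \<subseteq> H \<and> H \<subseteq> B \<and> card H = card I + t} = (card B - card I) choose t"
proof -
  have fI: "finite I" using assms finite_subset by blast
  have "bij_betw (\<lambda>J. J \<union> I) {J. J \<subseteq> B - I \<and> card J = t} {H. I \<subseteq> H \<and> H \<subseteq> B \<and> card H = card I + t}"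
  proof (rule bij_betw_byWitness[where f' = "\<lambda>H. H - I"])
    show "\<forall>J\<in>{J. J \<subseteq> B - I \<and> card J = t}. J \<union> I - I = J" by auto
    show "\<forall>H\<in>{H. I \<subseteq> H \<and> H \<subseteq> B \<and> card H = card I + t}. H - I \<union> I = H" by auto
    show "(\<lambda>J. J \<union> I) ` {J. J \<subseteq> B - I \<and> card J = t} \<subseteq> {H. I \<subseteq> H \<and> H \<subseteq> B \<and> card H = card I + t}"
    proof safe
      fix J assume J: "J \<subseteq> B - I" "t = card J"
      have "finite J" using J assms(1) finite_subset by blast
      then show "card (J \<union> I) = card I + card J"
        using J fI by (subst card_Un_disjoint) auto
    qed (use assms in auto)
    show "(\<lambda>H. H - I) ` {H. I \<subseteq> H \<and> H \<subseteq> B \<and> card H = card I + t} \<subseteq> {J. J \<subseteq> B - I \<and> card J = t}"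
    proof safe
      fix H assume H: "I \<subseteq> H" "H \<subseteq> B" "card H = card I + t"
      then show "card (H - I) = t" using fI by (simp add: card_Diff_subset)
    qed auto
  qed
  then have "card {H. I \<subseteq> H \<and> H \<subseteq> B \<and> card H = card I + t} = card {J. J \<subseteq> B - I \<and> card J = t}"
    by (simp add: bij_betw_same_card)
  also have "\<dots> = card (B - I) choose t" using assms by (simp add: n_subsets)
  also have "card (B - I) = card B - card I" using fI assms by (simp add: card_Diff_subset)
  finally show ?thesis .
qed

lemma sum_ind: "finite T \<Longrightarrow> (\<Sum>H\<in>T. if P H then (1::int) else 0) = int (card {H\<in>T. P H})"
  by (simp add: sum.If_cases Int_def)
lemma mod_dvd_int: assumes "(x::nat) mod p = k" shows "int p dvd int x - int k"
proof -
  have "int x = int p * int (x div p) + int k"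
    using div_mult_mod_eq[of x p] assms by (metis of_nat_add of_nat_mult mult.commute)
  then have "int x - int k = int p * int (x div p)" by simp
  then show ?thesis by simp
qed

lemma general_case:
  fixes p n m i :: nat and K :: "nat set" and A :: "nat \<Rightarrow> nat set"
  assumes p: "prime p" and fK: "finite K" and rp: "2 * card K < p"
    and Asub: "\<And>j. j < m \<Longrightarrow> A j \<subseteq> {1..n}"
    and AK: "\<And>j. j < m \<Longrightarrow> card (A j) mod p \<in> K"
    and IX: "I \<subseteq> {1..n-1}" and cI: "card I = i"
  shows "in_span_mod p m
           (\<lambda>j. \<Sum>H\<in>{H. H \<subseteq> {1..n-1} \<and> card H = i + 2 * card K \<and> I \<subseteq> H}. lin_form A m H j)
           (lin_form A m)
           {H. H \<subseteq> {1..n-1} \<and> i \<le> card H \<and> card H < i + 2 * card K}"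
proof -
  define r where "r = card K"
  define X where "X = {1..n-1}"
  define T where "T = {H. H \<subseteq> X \<and> card H = i + 2 * r \<and> I \<subseteq> H}"
  define G where "G = {H. H \<subseteq> X \<and> i \<le> card H \<and> card H < i + 2 * r}"
  define P where "P y = (\<Prod>k\<in>K. (int y - (int k - int i)) * (int y - (int k - int i - 1)))" for y
  obtain g where g: "BS (2 * r) g" "\<And>y. P y = fact (2 * r) * int (y choose (2 * r)) + g y"
    using prodK[OF fK, of i] unfolding P_def r_def by blast
  obtain c where c: "\<And>y. g y = (\<Sum>t<2 * r. c t * int (y choose t))" using g(1) unfolding BS_def by blast
  have "\<not> p dvd fact (2 * r)" using p rp by (simp add: prime_dvd_fact_iff r_def)
  then have "coprime p (fact (2 * r))" using p by (simp add: prime_imp_coprime)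
  then have "coprime (fact (2 * r) :: int) (int p)"
    by (metis coprime_commute coprime_int_iff of_nat_fact)
  then obtain w where w: "[fact (2 * r) * w = 1] (mod int p)" using cong_solve_coprime_int by blast
  define e where "e t = - w * c t" for t
  have fX: "finite X" unfolding X_def by simp
  have fT: "finite T" unfolding T_def using fX by (auto intro: finite_subset)
  have fG: "finite G" unfolding G_def using fX by (auto intro: finite_subset)
  have key: "[(\<Sum>H\<in>T. lin_form A m H j) = (\<Sum>H\<in>G. (if I \<subseteq> H then e (card H - i) else 0) * lin_form A m H j)] (mod int p)"
    if j: "j < m" for j
  proof -
    have lf: "lin_form A m H j = (if H \<subseteq> A j then 1 else 0)" for H using j by (simp add: lin_form_def)
    show ?thesis
    proof (cases "I \<subseteq> A j")
      case False
      have "(\<Sum>H\<in>T. lin_form A m H j) = 0"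
        using False unfolding lf T_def by (intro sum.neutral) auto
      moreover have "(\<Sum>H\<in>G. (if I \<subseteq> H then e (card H - i) else 0) * lin_form A m H j) = 0"
        using False unfolding lf by (intro sum.neutral) auto
      ultimately show ?thesis by simp
    next
      case True
      define B where "B = A j \<inter> X"
      have fB: "finite B" unfolding B_def using fX by simp
      have IB: "I \<subseteq> B" using True IX unfolding B_def X_def by auto
      define y where "y = card B - i"
      have ai: "i \<le> card B" using IB fB cI card_mono by blast
      have cnt: "card {H. I \<subseteq> H \<and> H \<subseteq> B \<and> card H = i + t} = y choose t" for t
        using count_sup[OF fB IB, of t] cI y_def by simp
      have lhs: "(\<Sum>H\<in>T. lin_form A m H j) = int (y choose (2 * r))"
      proof -
        have "(\<Sum>H\<in>T. lin_form A m H j) = int (card {H\<in>T. H \<subseteq> A j})"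
          unfolding lf by (rule sum_ind[OF fT])
        also have "{H\<in>T. H \<subseteq> A j} = {H. I \<subseteq> H \<and> H \<subseteq> B \<and> card H = i + 2 * r}"
          unfolding T_def B_def by auto
        finally show ?thesis using cnt by simp
      qed
      have rhs: "(\<Sum>H\<in>G. (if I \<subseteq> H then e (card H - i) else 0) * lin_form A m H j)
          = (\<Sum>t<2 * r. e t * int (y choose t))"
      proof -
        have "(\<Sum>H\<in>G. (if I \<subseteq> H then e (card H - i) else 0) * lin_form A m H j)
           = (\<Sum>H\<in>G. if I \<subseteq> H \<and> H \<subseteq> A j then e (card H - i) else 0)"
          unfolding lf by (rule sum.cong) auto
        also have "\<dots> = (\<Sum>t<2 * r. \<Sum>H\<in>{H\<in>G. card H - i = t}. if I \<subseteq> H \<and> H \<subseteq> A j then e (card H - i) else 0)"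
          by (rule sum.group[symmetric]) (use fG in \<open>auto simp: G_def\<close>)
        also have "\<dots> = (\<Sum>t<2 * r. e t * int (y choose t))"
        proof (rule sum.cong[OF refl])
          fix t assume t: "t \<in> {..<2 * r}"
          have "(\<Sum>H\<in>{H\<in>G. card H - i = t}. if I \<subseteq> H \<and> H \<subseteq> A j then e (card H - i) else 0)
              = (\<Sum>H\<in>{H\<in>G. card H - i = t}. e t * (if I \<subseteq> H \<and> H \<subseteq> A j then 1 else 0))"
            by (rule sum.cong) auto
          also have "\<dots> = e t * int (card {H\<in>{H\<in>G. card H - i = t}. I \<subseteq> H \<and> H \<subseteq> A j})"
            by (simp add: sum_distrib_left[symmetric] sum_ind fG)
          also have "{H\<in>{H\<in>G. card H - i = t}. I \<subseteq> H \<and> H \<subseteq> A j} = {H. I \<subseteq> H \<and> H \<subseteq> B \<and> card H = i + t}"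
            using t unfolding G_def B_def by auto
          finally show "(\<Sum>H\<in>{H\<in>G. card H - i = t}. if I \<subseteq> H \<and> H \<subseteq> A j then e (card H - i) else 0) = e t * int (y choose t)"
            using cnt by simp
        qed
        finally show ?thesis .
      qed
      have P0: "[P y = 0] (mod int p)"
      proof -
        define k where "k = card (A j) mod p"
        have kK: "k \<in> K" using AK[OF j] k_def by simp
        have dk: "int p dvd int (card (A j)) - int k"
          using mod_dvd_int[of "card (A j)" p k] k_def by simp
        have BA: "B = A j - {n}" using Asub[OF j] unfolding B_def X_def by fastforce
        have fA: "finite (A j)" using Asub[OF j] finite_subset by blast
        have "int p dvd (int y - (int k - int i)) * (int y - (int k - int i - 1))"
        proof (cases "n \<in> A j")
          case True
          then have "card B = card (A j) - 1" "card (A j) \<ge> 1" using BA fA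
            by (auto simp: card_gt_0_iff Suc_le_eq)
          then have "int y - (int k - int i - 1) = int (card (A j)) - int k" using ai y_def by simp
          then show ?thesis using dk by (metis dvd_mult)
        next
          case False
          then have "card B = card (A j)" using BA by simp
          then have "int y - (int k - int i) = int (card (A j)) - int k" using ai y_def by simp
          then show ?thesis using dk by (metis dvd_mult2)
        qed
        then have "int p dvd P y" unfolding P_def using kK fK by (meson dvd_prodI dvd_trans)
        then show ?thesis by (simp add: cong_0_iff)
      qed
      have "[int (y choose (2 * r)) = fact (2 * r) * w * int (y choose (2 * r))] (mod int p)"
        using cong_scalar_right[OF w, of "int (y choose (2 * r))"] by (simp add: cong_sym mult.commute)
      also have "fact (2 * r) * w * int (y choose (2 * r)) = w * P y - w * g y"
        using g(2)[of y] by (simp add: algebra_simps)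
      also have "[w * P y - w * g y = w * 0 - w * g y] (mod int p)"
        by (intro cong_diff cong_mult P0 cong_refl)
      also have "w * 0 - w * g y = (\<Sum>t<2 * r. e t * int (y choose t))"
        proof -
        have "(\<Sum>t<2*r. e t * int (y choose t)) = - (\<Sum>t<2*r. w * (c t * int (y choose t)))"
          unfolding e_def sum_negf[symmetric] by (rule sum.cong) auto
        then show ?thesis unfolding c sum_distrib_left by simp
      qed
      finally have "[int (y choose (2 * r)) = (\<Sum>t<2 * r. e t * int (y choose t))] (mod int p)" .
      then show ?thesis unfolding lhs rhs .
    qed
  qed
  show ?thesis unfolding in_span_mod_def
    apply (rule exI[of _ "\<lambda>H. if I \<subseteq> H then e (card H - i) else 0"])
    using key unfolding T_def G_def X_def r_def by blast
qed
lemma sub_lem: "A \<subseteq> {1..n} \<Longrightarrow> A \<inter> {1..n-1} = A - {(n::nat)}" by fastforce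

lemma edge_case:
  fixes n m k :: nat and A :: "nat \<Rightarrow> nat set" and v :: "nat \<Rightarrow> int"
  assumes k2: "k < 2"
    and Asub: "\<And>j. j < m \<Longrightarrow> A j \<subseteq> {1..n}"
    and Ak: "\<And>j. j < m \<Longrightarrow> card (A j) mod 2 = k"
    and Al: "\<And>j l. j < m \<Longrightarrow> l < m \<Longrightarrow> j \<noteq> l \<Longrightarrow> card (A j \<inter> A l) mod 2 = 1 - k"
  shows "in_span_mod 2 m v (lin_form A m) {H. H \<subseteq> {1..n-1} \<and> card H < 2}"
proof -
  define X where "X = {1..n-1}"
  define d where "d h = (\<Sum>l<m. v l * (if h \<in> A l then 1 else 0))" for h
  define V where "V = (\<Sum>l<m. v l)"
  define c0 where "c0 = V * (1 - int k) + int k * d n"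
  define coef where "coef H = (if H = {} then c0 else if card H = 1 then d (the_elem H) - d n else 0)" for H
  have fX: "finite X" unfolding X_def by simp
  have nX: "n \<notin> X" unfolding X_def by auto
  have Geq: "{H. H \<subseteq> X \<and> card H < 2} = insert {} ((\<lambda>h. {h}) ` X)"
  proof (rule set_eqI, rule iffI)
    fix H assume "H \<in> {H. H \<subseteq> X \<and> card H < 2}"
    then have H: "H \<subseteq> X" "card H < 2" by auto
    have "finite H" using H fX finite_subset by blast
    then have "card H = 0 \<or> card H = 1" using H by linarith
    then show "H \<in> insert {} ((\<lambda>h. {h}) ` X)" using H \<open>finite H\<close> by (auto simp: card_1_singleton_iff)
  qed auto
  have key: "[v j = (\<Sum>H\<in>{H. H \<subseteq> X \<and> card H < 2}. coef H * lin_form A m H j)] (mod int 2)"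
    if j: "j < m" for j
  proof -
    have fA: "finite (A j)" using Asub[OF j] finite_subset by blast
    have lf: "lin_form A m H j = (if H \<subseteq> A j then 1 else 0)" for H using j by (simp add: lin_form_def)
    define SX where "SX = (\<Sum>h\<in>A j \<inter> X. d h)"
    define \<alpha> where "\<alpha> = card (A j \<inter> X)"
    define \<beta> :: int where "\<beta> = (if n \<in> A j then 1 else 0)"
    have rhs: "(\<Sum>H\<in>{H. H \<subseteq> X \<and> card H < 2}. coef H * lin_form A m H j) = c0 + SX - int \<alpha> * d n"
    proof -
      have "(\<Sum>H\<in>{H. H \<subseteq> X \<and> card H < 2}. coef H * lin_form A m H j)
          = coef {} * lin_form A m {} j + (\<Sum>H\<in>(\<lambda>h. {h}) ` X. coef H * lin_form A m H j)"
        unfolding Geq using fX by (subst sum.insert) auto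
      also have "(\<Sum>H\<in>(\<lambda>h. {h}) ` X. coef H * lin_form A m H j) = (\<Sum>h\<in>X. coef {h} * lin_form A m {h} j)"
        by (subst sum.reindex) (auto simp: inj_on_def)
      also have "\<dots> = (\<Sum>h\<in>X. if h \<in> A j then d h - d n else 0)"
        by (rule sum.cong) (auto simp: coef_def lf)
      also have "\<dots> = (\<Sum>h\<in>X \<inter> A j. d h - d n)"
        using fX by (simp add: sum.inter_restrict)
      also have "\<dots> = SX - int \<alpha> * d n"
        unfolding SX_def \<alpha>_def by (simp add: sum_subtractf Int_commute)
      finally show ?thesis by (simp add: coef_def lf)
    qed
    define Q where "Q = (\<Sum>l<m. v l * int (card (A j \<inter> A l)))"
    have Q1: "Q = (\<Sum>h\<in>A j. d h)"
    proof -
      have "Q = (\<Sum>l<m. v l * (\<Sum>h\<in>A j. if h \<in> A l then 1 else 0))"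
        unfolding Q_def using fA by (simp add: sum_ind Int_def)
      also have "\<dots> = (\<Sum>l<m. \<Sum>h\<in>A j. v l * (if h \<in> A l then 1 else 0))"
        by (simp add: sum_distrib_left)
      also have "\<dots> = (\<Sum>h\<in>A j. d h)" unfolding d_def by (rule sum.swap)
      finally show ?thesis .
    qed
    have Q2: "(\<Sum>h\<in>A j. d h) = SX + \<beta> * d n"
    proof (cases "n \<in> A j")
      case True
      have "A j = insert n (A j \<inter> X)" using Asub[OF j] True unfolding X_def by fastforce
      then have "(\<Sum>h\<in>A j. d h) = (\<Sum>h\<in>insert n (A j \<inter> X). d h)" by simp
      also have "\<dots> = d n + SX" unfolding SX_def using fX nX by (subst sum.insert) auto
      finally show ?thesis using True \<beta>_def by simp
    next
      case False
      have "A j = A j \<inter> X" using sub_lem[OF Asub[OF j]] False unfolding X_def by simp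
      then show ?thesis using False \<beta>_def SX_def by simp
    qed
    have cardA: "int (card (A j)) = int \<alpha> + \<beta>"
    proof (cases "n \<in> A j")
      case True
      have "A j = insert n (A j \<inter> X)" using Asub[OF j] True unfolding X_def by fastforce
      then have "card (A j) = Suc \<alpha>" unfolding \<alpha>_def using fX nX by (metis IntE card_insert_disjoint finite_Int)
      then show ?thesis using True \<beta>_def by simp
    next
      case False
      have "A j = A j \<inter> X" using sub_lem[OF Asub[OF j]] False unfolding X_def by simp
      then show ?thesis using False \<beta>_def \<alpha>_def by simp
    qed
    define Q' where "Q' = V * (1 - int k) + v j * (2 * int k - 1)"
    have Q'eq: "Q' = (\<Sum>l<m. v l * (if l = j then int k else 1 - int k))"
    proof -
      have "(\<Sum>l<m. v l * (if l = j then int k else 1 - int k)) = (\<Sum>l<m. v l * (1 - int k) + (if l = j then v l * (2 * int k - 1) else 0))"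
        by (rule sum.cong) (auto simp: algebra_simps)
      also have "\<dots> = V * (1 - int k) + v j * (2 * int k - 1)"
        using j by (simp add: sum.distrib V_def sum_distrib_right)
      finally show ?thesis unfolding Q'_def by simp
    qed
    have dQ: "2 dvd Q - Q'"
    proof -
      have "Q - Q' = (\<Sum>l<m. v l * (int (card (A j \<inter> A l)) - (if l = j then int k else 1 - int k)))"
        unfolding Q_def Q'eq by (simp add: sum_subtractf right_diff_distrib)
      also have "2 dvd \<dots>"
      proof (rule dvd_sum)
        fix l assume l: "l \<in> {..<m}"
        have "2 dvd int (card (A j \<inter> A l)) - (if l = j then int k else 1 - int k)"
        proof (cases "l = j")
          case True
          then show ?thesis using Ak[OF j] k2
            using mod_dvd_int[of "card (A j)" 2 k] by simp
        next
          case False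
          have "card (A j \<inter> A l) mod 2 = 1 - k" using Al[OF j _ False[symmetric]] l by auto
          then have "int 2 dvd int (card (A j \<inter> A l)) - int (1 - k)" by (rule mod_dvd_int)
          moreover have "int (1 - k) = 1 - int k" using k2 by simp
          ultimately show ?thesis using False by simp
        qed
        then show "2 dvd v l * (int (card (A j \<inter> A l)) - (if l = j then int k else 1 - int k))" by simp
      qed
      finally show ?thesis .
    qed
    have dk: "2 dvd int k - int (card (A j))"
      using mod_dvd_int[OF Ak[OF j]] by (simp add: dvd_diff_commute)
    have "c0 + SX - int \<alpha> * d n - v j = (Q - Q') + 2 * (V * (1 - int k)) + 2 * (v j * (int k - 1)) + (int k - int (card (A j))) * d n"
      unfolding c0_def Q'_def cardA using Q1 Q2 by (simp add: algebra_simps)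
    moreover have "2 dvd (Q - Q') + 2 * (V * (1 - int k)) + 2 * (v j * (int k - 1)) + (int k - int (card (A j))) * d n"
      using dQ dk by (intro dvd_add) auto
    ultimately have X: "2 dvd c0 + SX - int \<alpha> * d n - v j" by metis
    then have "int 2 dvd v j - (c0 + SX - int \<alpha> * d n)"
      by (simp only: of_nat_numeral dvd_diff_commute)
    then show ?thesis by (simp only: rhs cong_iff_dvd_diff)
  qed
  show ?thesis unfolding in_span_mod_def
    apply (rule exI[of _ coef])
    using key unfolding X_def by blast
qed
theorem mainTheorem4:
  fixes p n m :: nat and K L :: "nat set" and A :: "nat \<Rightarrow> nat set"
  assumes "prime p"
    and "K \<subseteq> {0..<p}" and "L \<subseteq> {0..<p}" and "K \<inter> L = {}"
    and "\<And>i. i < m \<Longrightarrow> A i \<subseteq> {1..n}"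
    and "inj_on A {0..<m}"
    and "\<And>i. i < m \<Longrightarrow> card (A i) mod p \<in> K"
    and "\<And>i j. i < m \<Longrightarrow> j < m \<Longrightarrow> i \<noteq> j \<Longrightarrow> card (A i \<inter> A j) mod p \<in> L"
    and "int i \<le> int (card L) - 2 * int (card K) + 1"
    and "I \<subseteq> {1..n-1}" and "card I = i"
  shows "in_span_mod p m
           (\<lambda>j. \<Sum>H\<in>{H. H \<subseteq> {1..n-1} \<and> card H = i + 2 * card K \<and> I \<subseteq> H}. lin_form A m H j)
           (lin_form A m)
           {H. H \<subseteq> {1..n-1} \<and> i \<le> card H \<and> card H < i + 2 * card K}"
proof -
  note p = assms(1)
  have fK: "finite K" using assms(2) finite_subset by blast
  have fL: "finite L" using assms(3) finite_subset by blast
  have "card (K \<union> L) \<le> card {0..<p}" using assms(2,3) by (intro card_mono) auto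
  then have sp: "card K + card L \<le> p" using card_Un_disjoint[OF fK fL assms(4)] by simp
  have p2: "p \<ge> 2" using p prime_ge_2_nat by blast
  show ?thesis
  proof (cases "card K = 0")
    case True
    then have "K = {}" using fK by simp
    then have "m = 0" using assms(7)[of 0] by (cases m) auto
    then show ?thesis unfolding in_span_mod_def by simp
  next
    case False
    show ?thesis
    proof (cases "2 * card K < p")
      case True
      show ?thesis by (rule general_case[OF p fK True assms(5,7,10,11)])
    next
      case c2: False
      have h9: "int (2 * card K) \<le> int (card L + 1)" using assms(9) by simp
      then have h9': "2 * card K \<le> card L + 1" by (simp only: of_nat_le_iff)
      have r1: "card K = 1" using False c2 sp h9' by linarith
      have pe: "p = 2" using r1 c2 p2 by linarith
      have s1: "card L = 1" using r1 sp pe h9' by linarith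
      have i0: "i = 0" using assms(9) r1 s1 by simp
      obtain k where k: "K = {k}" using r1 by (rule card_1_singletonE)
      obtain l where l: "L = {l}" using s1 by (rule card_1_singletonE)
      have k2: "k < 2" using assms(2) k pe by simp
      have l2: "l < 2" using assms(3) l pe by simp
      have kl: "k \<noteq> l" using assms(4) k l by simp
      have lk: "l = 1 - k" using k2 l2 kl by linarith
      have "in_span_mod 2 m
           (\<lambda>j. \<Sum>H\<in>{H. H \<subseteq> {1..n-1} \<and> card H = i + 2 * card K \<and> I \<subseteq> H}. lin_form A m H j)
           (lin_form A m) {H. H \<subseteq> {1..n-1} \<and> card H < 2}"
      proof (rule edge_case[OF k2 assms(5)])
        show "\<And>j. j < m \<Longrightarrow> card (A j) mod 2 = k" using assms(7) k pe by auto
        show "\<And>j l'. j < m \<Longrightarrow> l' < m \<Longrightarrow> j \<noteq> l' \<Longrightarrow> card (A j \<inter> A l') mod 2 = 1 - k"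
          using assms(8) l lk pe by auto
      qed
      moreover have GE: "{H. H \<subseteq> {1..n-1} \<and> i \<le> card H \<and> card H < i + 2 * card K} = {H. H \<subseteq> {1..n-1} \<and> card H < 2}"
        using i0 r1 by (simp add: numeral_2_eq_2)
      ultimately show ?thesis unfolding pe by metis
    qed
  qed
qed


end
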